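(* If $X,Y,Z$ are independent real-valued continuous random variables, then $$h(X-Z)+h(Y)\leq h(X+Y)+h(Y+Z).$$
   Context: Standing conventions: all random variables are real-valued with densities, and every differential entropy $h$ appearing is assumed to exist and be finite. *)

theory Defs
  imports "HOL-Probability.Probability"
begin

end

theory Submission
  imports Defs
begin

lemma ent_eq:
  assumes info: "information_space M b"
  and h: "information_space.finite_entropy M b lborel V f"
  shows "prob_space.entropy M b lborel V = - (\<integral>\<omega>. log b (f (V \<omega>)) \<partial>M)"
    and "integrable M (\<lambda>\<omega>. log b (f (V \<omega>)))"
    and "AE \<omega> in M. 0 < f (V \<omega>)"
proof -
  interpret information_space M b by fact
  have d: "distributed M lborel V f" using h by (rule finite_entropy_distributed)
  have nn: "\<And>x. 0 \<le> f x" using finite_entropy_nn[OF h] by simp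
  have fm[measurable]: "f \<in> borel_measurable lborel" using finite_entropy_measurable[OF h] .
  have Vm[measurable]: "V \<in> measurable M lborel" using d by (rule distributed_measurable)
  have i: "integrable lborel (\<lambda>x. f x * log b (f x))" using h by (rule finite_entropy_integrable)
  show "prob_space.entropy M b lborel V = - (\<integral>\<omega>. log b (f (V \<omega>)) \<partial>M)"
    using entropy_distr[OF d] nn distributed_integral[OF d, of "\<lambda>x. log b (f x)"] by simp
  show "integrable M (\<lambda>\<omega>. log b (f (V \<omega>)))"
    using distributed_integrable[OF d, of "\<lambda>x. log b (f x)"] nn i by simp
  have "AE x in distr M lborel V. 0 < f x"
    unfolding distributed_distr_eq_density[OF d]
    by (subst AE_density) (auto simp: nn)
  then show "AE \<omega> in M. 0 < f (V \<omega>)" by (rule AE_distrD[OF Vm])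
qed

lemma indep_nn:
  fixes A :: "'a \<Rightarrow> real \<times> real" and Y :: "'a \<Rightarrow> real" and fY :: "real \<Rightarrow> real"
    and g :: "real \<times> real \<Rightarrow> real \<Rightarrow> ennreal"
  assumes P: "prob_space M"
    and ind: "prob_space.indep_var M (borel \<Otimes>\<^sub>M borel) A (borel \<Otimes>\<^sub>M borel) (\<lambda>\<omega>. (0, Y \<omega>))"
    and dY: "distributed M lborel Y fY"
    and gm[measurable]: "(\<lambda>(p,y). g p y) \<in> borel_measurable ((borel \<Otimes>\<^sub>M borel) \<Otimes>\<^sub>M borel)"
  shows "(\<integral>\<^sup>+\<omega>. g (A \<omega>) (Y \<omega>) \<partial>M) = (\<integral>\<^sup>+\<omega>. (\<integral>\<^sup>+y. fY y * g (A \<omega>) y \<partial>lborel) \<partial>M)"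
proof -
  interpret prob_space M by fact
  let ?B2 = "borel \<Otimes>\<^sub>M (borel::real measure)"
  let ?Y0 = "\<lambda>\<omega>. (0::real, Y \<omega>)"
  have rv: "random_variable ?B2 A" "random_variable ?B2 ?Y0"
    and eq: "distr M ?B2 A \<Otimes>\<^sub>M distr M ?B2 ?Y0 = distr M (?B2 \<Otimes>\<^sub>M ?B2) (\<lambda>x. (A x, ?Y0 x))"
    using ind indep_var_distribution_eq by blast+
  note rv[measurable]
  have Ym[measurable]: "Y \<in> borel_measurable M" using dY by (simp add: distributed_measurable)
  interpret pA: prob_space "distr M ?B2 A" by (rule prob_space_distr) fact
  interpret pY: prob_space "distr M ?B2 ?Y0" by (rule prob_space_distr) fact
  interpret pp: pair_sigma_finite "distr M ?B2 A" "distr M ?B2 ?Y0" ..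
  have "(\<integral>\<^sup>+\<omega>. g (A \<omega>) (Y \<omega>) \<partial>M) = (\<integral>\<^sup>+w. g (fst w) (snd (snd w)) \<partial>distr M (?B2 \<Otimes>\<^sub>M ?B2) (\<lambda>x. (A x, ?Y0 x)))"
    by (subst nn_integral_distr) auto
  also have "\<dots> = (\<integral>\<^sup>+w. g (fst w) (snd (snd w)) \<partial>(distr M ?B2 A \<Otimes>\<^sub>M distr M ?B2 ?Y0))"
    by (simp add: eq)
  also have "\<dots> = (\<integral>\<^sup>+p. \<integral>\<^sup>+q. g p (snd q) \<partial>distr M ?B2 ?Y0 \<partial>distr M ?B2 A)"
    by (subst pY.nn_integral_fst[symmetric]) auto
  also have "\<dots> = (\<integral>\<^sup>+p. \<integral>\<^sup>+y. fY y * g p y \<partial>lborel \<partial>distr M ?B2 A)"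
  proof (rule nn_integral_cong)
    fix p
    have gp: "(\<lambda>y. g p y) \<in> borel_measurable borel"
    proof -
      have "(\<lambda>y. (\<lambda>(p,y). g p y) (p,y)) \<in> borel_measurable borel"
        by (rule measurable_Pair2[OF gm]) (simp add: space_pair_measure)
      then show ?thesis by simp
    qed
    have "(\<integral>\<^sup>+q. g p (snd q) \<partial>distr M ?B2 ?Y0) = (\<integral>\<^sup>+\<omega>. g p (Y \<omega>) \<partial>M)"
      by (subst nn_integral_distr) (auto intro: measurable_compose[OF measurable_snd gp] gp)
    also have "\<dots> = (\<integral>\<^sup>+y. fY y * g p y \<partial>lborel)"
      by (rule distributed_nn_integral[OF dY, symmetric]) (simp add: gp)
    finally show "(\<integral>\<^sup>+q. g p (snd q) \<partial>distr M ?B2 ?Y0) = (\<integral>\<^sup>+y. fY y * g p y \<partial>lborel)" .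
  qed
  also have "\<dots> = (\<integral>\<^sup>+\<omega>. (\<integral>\<^sup>+y. fY y * g (A \<omega>) y \<partial>lborel) \<partial>M)"
  proof -
    have fm: "(\<lambda>x. ennreal (fY x)) \<in> borel_measurable borel"
      using distributed_borel_measurable[OF dY] by simp
    have "(\<lambda>(p,y). ennreal (fY y) * g p y) \<in> borel_measurable (?B2 \<Otimes>\<^sub>M borel)"
      using fm by measurable
    then have "(\<lambda>(p,y). ennreal (fY y) * g p y) \<in> borel_measurable (?B2 \<Otimes>\<^sub>M lborel)"
    proof -
      have "borel_measurable (?B2 \<Otimes>\<^sub>M lborel) = (borel_measurable (?B2 \<Otimes>\<^sub>M borel) :: (_ \<Rightarrow> ennreal) set)"
        by (rule measurable_cong_sets) (auto intro!: sets_pair_measure_cong)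
      with \<open>(\<lambda>(p,y). ennreal (fY y) * g p y) \<in> borel_measurable (?B2 \<Otimes>\<^sub>M borel)\<close> show ?thesis by simp
    qed
    then have "(\<lambda>p. \<integral>\<^sup>+y. fY y * g p y \<partial>lborel) \<in> borel_measurable ?B2"
      by (rule lborel.borel_measurable_nn_integral[of "\<lambda>p y. ennreal (fY y) * g p y", simplified])
    then show ?thesis by (subst nn_integral_distr) auto
  qed
  finally show ?thesis .
qed

lemma shift_int:
  fixes h :: "real \<Rightarrow> ennreal"
  assumes [measurable]: "h \<in> borel_measurable borel"
  shows "(\<integral>\<^sup>+y. h (t + y) \<partial>lborel) = (\<integral>\<^sup>+s. h s \<partial>lborel)"
  using nn_integral_real_affine[of h 1 t] by simp

lemma dens_one:
  assumes P: "prob_space M" and d: "distributed M lborel U f"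
  shows "(\<integral>\<^sup>+x. ennreal (f x) \<partial>lborel) = 1"
proof -
  interpret prob_space M by fact
  have "(\<integral>\<^sup>+x. ennreal (f x) * 1 \<partial>lborel) = (\<integral>\<^sup>+\<omega>. 1 \<partial>M)"
    by (rule distributed_nn_integral[OF d]) simp
  then show ?thesis by (simp add: emeasure_space_1)
qed

lemma K_int:
  fixes fU fV :: "real \<Rightarrow> real"
  assumes P: "prob_space M" and dU: "distributed M lborel U fU" and dV: "distributed M lborel V fV"
  shows "(\<integral>\<^sup>+d. (\<integral>\<^sup>+s. ennreal (fU (d + s)) * ennreal (fV s) \<partial>lborel) \<partial>lborel) = 1"
proof -
  have mU[measurable]: "(\<lambda>x. ennreal (fU x)) \<in> borel_measurable borel"
    using distributed_borel_measurable[OF dU] by simp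
  have mV[measurable]: "(\<lambda>x. ennreal (fV x)) \<in> borel_measurable borel"
    using distributed_borel_measurable[OF dV] by simp
  have pl: "pair_sigma_finite lborel lborel" by (simp add: pair_sigma_finite_def lborel.sigma_finite_measure_axioms)
  have "(\<integral>\<^sup>+d. (\<integral>\<^sup>+s. ennreal (fU (d + s)) * ennreal (fV s) \<partial>lborel) \<partial>lborel)
     = (\<integral>\<^sup>+s. (\<integral>\<^sup>+d. ennreal (fU (d + s)) * ennreal (fV s) \<partial>lborel) \<partial>lborel)"
    by (rule pair_sigma_finite.Fubini'[OF pl, symmetric]) simp
  also have "\<dots> = (\<integral>\<^sup>+s. ennreal (fV s) * (\<integral>\<^sup>+d. ennreal (fU (s + d)) \<partial>lborel) \<partial>lborel)"
    by (rule nn_integral_cong) (simp add: add.commute mult.commute nn_integral_cmult)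
  also have "\<dots> = (\<integral>\<^sup>+s. ennreal (fV s) \<partial>lborel)"
    by (rule nn_integral_cong) (simp add: shift_int[of "\<lambda>x. ennreal (fU x)"] dens_one[OF P dU])
  also have "\<dots> = 1" by (rule dens_one[OF P dV])
  finally show ?thesis .
qed

theorem mainTheorem3:
  fixes M :: "'a measure" and b :: real
    and X Y Z :: "'a \<Rightarrow> real"
    and fX fZ fY fXmZ fXpY fYpZ :: "real \<Rightarrow> real"
  assumes info: "information_space M b"
    and indep: "prob_space.indep_vars M (\<lambda>_. borel)
                  (\<lambda>i::nat. if i = 0 then X else if i = 1 then Y else Z) {0, 1, 2}"
    and dX: "distributed M lborel X fX" and nX: "\<And>x. 0 \<le> fX x"
    and dZ: "distributed M lborel Z fZ" and nZ: "\<And>x. 0 \<le> fZ x"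
    and hY: "information_space.finite_entropy M b lborel Y fY"
    and hXmZ: "information_space.finite_entropy M b lborel (\<lambda>\<omega>. X \<omega> - Z \<omega>) fXmZ"
    and hXpY: "information_space.finite_entropy M b lborel (\<lambda>\<omega>. X \<omega> + Y \<omega>) fXpY"
    and hYpZ: "information_space.finite_entropy M b lborel (\<lambda>\<omega>. Y \<omega> + Z \<omega>) fYpZ"
  shows "prob_space.entropy M b lborel (\<lambda>\<omega>. X \<omega> - Z \<omega>) + prob_space.entropy M b lborel Y
         \<le> prob_space.entropy M b lborel (\<lambda>\<omega>. X \<omega> + Y \<omega>)
           + prob_space.entropy M b lborel (\<lambda>\<omega>. Y \<omega> + Z \<omega>)"
proof -
  interpret information_space M b by fact
  note eD = ent_eq[OF info hXmZ] and eY = ent_eq[OF info hY]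
   and eU = ent_eq[OF info hXpY] and eV = ent_eq[OF info hYpZ]
  have dY: "distributed M lborel Y fY" using hY by (rule finite_entropy_distributed)
  have dD: "distributed M lborel (\<lambda>\<omega>. X \<omega> - Z \<omega>) fXmZ" using hXmZ by (rule finite_entropy_distributed)
  have dU: "distributed M lborel (\<lambda>\<omega>. X \<omega> + Y \<omega>) fXpY" using hXpY by (rule finite_entropy_distributed)
  have dV: "distributed M lborel (\<lambda>\<omega>. Y \<omega> + Z \<omega>) fYpZ" using hYpZ by (rule finite_entropy_distributed)
  have nY: "\<And>x. 0 \<le> fY x" using finite_entropy_nn[OF hY] by simp
  have nD: "\<And>x. 0 \<le> fXmZ x" using finite_entropy_nn[OF hXmZ] by simp
  have nU: "\<And>x. 0 \<le> fXpY x" using finite_entropy_nn[OF hXpY] by simp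
  have nV: "\<And>x. 0 \<le> fYpZ x" using finite_entropy_nn[OF hYpZ] by simp
  have mY[measurable]: "fY \<in> borel_measurable borel" using finite_entropy_measurable[OF hY] by simp
  have mD[measurable]: "fXmZ \<in> borel_measurable borel" using finite_entropy_measurable[OF hXmZ] by simp
  have mU[measurable]: "fXpY \<in> borel_measurable borel" using finite_entropy_measurable[OF hXpY] by simp
  have mV[measurable]: "fYpZ \<in> borel_measurable borel" using finite_entropy_measurable[OF hYpZ] by simp
  have Xm[measurable]: "X \<in> borel_measurable M" using distributed_measurable[OF dX] by simp
  have Ym[measurable]: "Y \<in> borel_measurable M" using distributed_measurable[OF dY] by simp
  have Zm[measurable]: "Z \<in> borel_measurable M" using distributed_measurable[OF dZ] by simp
  have b1: "1 < b" by (rule b_gt_1)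
  have lnb: "0 < ln b" using b1 by simp
  let ?F = "(\<lambda>i::nat. if i = 0 then X else if i = 1 then Y else Z)"
  have i2: "indep_var (PiM {0,2} (\<lambda>_. borel)) (\<lambda>\<omega>. restrict (\<lambda>i. ?F i \<omega>) {0,2})
                      (PiM {1} (\<lambda>_. borel)) (\<lambda>\<omega>. restrict (\<lambda>i. ?F i \<omega>) {1})"
    by (rule indep_var_restrict[OF indep]) auto
  have "indep_var (borel \<Otimes>\<^sub>M borel) ((\<lambda>f. (f 0, f 2)) \<circ> (\<lambda>\<omega>. restrict (\<lambda>i. ?F i \<omega>) {0,2}))
                  (borel \<Otimes>\<^sub>M borel) ((\<lambda>f. (0::real, f 1)) \<circ> (\<lambda>\<omega>. restrict (\<lambda>i. ?F i \<omega>) {1}))"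
    by (rule indep_var_compose[OF i2]) auto
  then have iXZY: "indep_var (borel \<Otimes>\<^sub>M borel) (\<lambda>\<omega>. (X \<omega>, Z \<omega>)) (borel \<Otimes>\<^sub>M borel) (\<lambda>\<omega>. (0, Y \<omega>))"
    by (simp add: comp_def)
  define R where "R \<omega> = fXpY (X \<omega> + Y \<omega>) * fYpZ (Y \<omega> + Z \<omega>) / (fXmZ (X \<omega> - Z \<omega>) * fY (Y \<omega>))" for \<omega>
  define g where "g p y = ennreal (fXpY (fst p + y) * fYpZ (y + snd p) / (fXmZ (fst p - snd p) * fY y))" for p :: "real \<times> real" and y
  define Kf where "Kf d = (\<integral>\<^sup>+s. ennreal (fXpY (d + s)) * ennreal (fYpZ s) \<partial>lborel)" for d
  have Rnn: "\<And>\<omega>. 0 \<le> R \<omega>" unfolding R_def using nD nU nV nY by simp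
  have Rm[measurable]: "R \<in> borel_measurable M" unfolding R_def by measurable
  have gm: "(\<lambda>(p,y). g p y) \<in> borel_measurable ((borel \<Otimes>\<^sub>M borel) \<Otimes>\<^sub>M borel)"
    unfolding g_def by measurable
  have Kfm[measurable]: "Kf \<in> borel_measurable borel"
    unfolding Kf_def by measurable
  have "(\<integral>\<^sup>+\<omega>. ennreal (R \<omega>) \<partial>M) = (\<integral>\<^sup>+\<omega>. g (X \<omega>, Z \<omega>) (Y \<omega>) \<partial>M)"
    by (simp add: R_def g_def)
  also have "\<dots> = (\<integral>\<^sup>+\<omega>. (\<integral>\<^sup>+y. fY y * g (X \<omega>, Z \<omega>) y \<partial>lborel) \<partial>M)"
    by (rule indep_nn[OF prob_space_axioms iXZY dY gm])
  also have "\<dots> \<le> (\<integral>\<^sup>+\<omega>. Kf (X \<omega> - Z \<omega>) * ennreal (1 / fXmZ (X \<omega> - Z \<omega>)) \<partial>M)"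
  proof (rule nn_integral_mono)
    fix \<omega>
    let ?x = "X \<omega>" and ?z = "Z \<omega>"
    have "(\<integral>\<^sup>+y. fY y * g (?x, ?z) y \<partial>lborel)
       \<le> (\<integral>\<^sup>+y. ennreal (fXpY (?x + y)) * ennreal (fYpZ (y + ?z)) * ennreal (1 / fXmZ (?x - ?z)) \<partial>lborel)"
    proof (rule nn_integral_mono)
      fix y
      have "fY y * (fXpY (?x + y) * fYpZ (y + ?z) / (fXmZ (?x - ?z) * fY y))
          \<le> fXpY (?x + y) * fYpZ (y + ?z) * (1 / fXmZ (?x - ?z))"
        using nY[of y] nU[of "?x+y"] nV[of "y+?z"] nD[of "?x-?z"]
        by (cases "fY y = 0") (auto simp: field_simps)
      then show "ennreal (fY y) * g (?x, ?z) y
         \<le> ennreal (fXpY (?x + y)) * ennreal (fYpZ (y + ?z)) * ennreal (1 / fXmZ (?x - ?z))"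
        unfolding g_def using nY[of y] nU[of "?x+y"] nV[of "y+?z"] nD[of "?x-?z"]
        by (simp add: ennreal_mult'[symmetric] ennreal_mult[symmetric] del: ennreal_mult ennreal_mult')
    qed
    also have "\<dots> = (\<integral>\<^sup>+y. ennreal (fXpY (?x + y)) * ennreal (fYpZ (y + ?z)) \<partial>lborel) * ennreal (1 / fXmZ (?x - ?z))"
      by (simp add: nn_integral_multc)
    also have "(\<integral>\<^sup>+y. ennreal (fXpY (?x + y)) * ennreal (fYpZ (y + ?z)) \<partial>lborel) = Kf (?x - ?z)"
    proof -
      have "(\<integral>\<^sup>+y. ennreal (fXpY (?x + y)) * ennreal (fYpZ (y + ?z)) \<partial>lborel)
          = (\<integral>\<^sup>+y. (\<lambda>s. ennreal (fXpY (?x - ?z + s)) * ennreal (fYpZ s)) (?z + y) \<partial>lborel)"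
        by (simp add: algebra_simps)
      also have "\<dots> = Kf (?x - ?z)"
        unfolding Kf_def by (rule shift_int) simp
      finally show ?thesis .
    qed
    finally show "(\<integral>\<^sup>+y. fY y * g (?x, ?z) y \<partial>lborel) \<le> Kf (?x - ?z) * ennreal (1 / fXmZ (?x - ?z))" .
  qed
  also have "\<dots> = (\<integral>\<^sup>+d. fXmZ d * (Kf d * ennreal (1 / fXmZ d)) \<partial>lborel)"
    by (rule distributed_nn_integral[OF dD, symmetric]) simp
  also have "\<dots> \<le> (\<integral>\<^sup>+d. Kf d \<partial>lborel)"
  proof (rule nn_integral_mono)
    fix d
    have "ennreal (fXmZ d) * ennreal (1 / fXmZ d) \<le> 1"
      using nD[of d] by (cases "fXmZ d = 0") (auto simp: ennreal_mult[symmetric])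
    then have "ennreal (fXmZ d) * (Kf d * ennreal (1 / fXmZ d)) \<le> 1 * Kf d"
      by (metis mult.assoc mult.commute mult_right_mono zero_le)
    then show "ennreal (fXmZ d) * (Kf d * ennreal (1 / fXmZ d)) \<le> Kf d" by simp
  qed
  also have "\<dots> = 1" unfolding Kf_def by (rule K_int[OF prob_space_axioms dU dV])
  finally have Rint: "(\<integral>\<^sup>+\<omega>. ennreal (R \<omega>) \<partial>M) \<le> 1" .
  have Ri: "integrable M R"
    using Rint Rnn by (intro integrableI_nonneg) (auto intro: le_less_trans[OF _ ennreal_less_top[of 1], simplified])
  have ER: "(\<integral>\<omega>. R \<omega> \<partial>M) \<le> 1"
  proof -
    have "ennreal (\<integral>\<omega>. R \<omega> \<partial>M) = (\<integral>\<^sup>+\<omega>. ennreal (R \<omega>) \<partial>M)"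
      using Ri Rnn by (intro nn_integral_eq_integral[symmetric]) auto
    with Rint have "ennreal (\<integral>\<omega>. R \<omega> \<partial>M) \<le> ennreal 1" by simp
    then show ?thesis by (subst (asm) ennreal_le_iff) auto
  qed
  define L where "L \<omega> = log b (fXpY (X \<omega> + Y \<omega>)) + log b (fYpZ (Y \<omega> + Z \<omega>))
                      - log b (fXmZ (X \<omega> - Z \<omega>)) - log b (fY (Y \<omega>))" for \<omega>
  have Li: "integrable M L" unfolding L_def
    using eD(2) eY(2) eU(2) eV(2) by auto
  have EL: "(\<integral>\<omega>. L \<omega> \<partial>M) = (\<integral>\<omega>. log b (fXpY (X \<omega> + Y \<omega>)) \<partial>M) + (\<integral>\<omega>. log b (fYpZ (Y \<omega> + Z \<omega>)) \<partial>M)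
      - (\<integral>\<omega>. log b (fXmZ (X \<omega> - Z \<omega>)) \<partial>M) - (\<integral>\<omega>. log b (fY (Y \<omega>)) \<partial>M)"
    unfolding L_def using eD(2) eY(2) eU(2) eV(2) by simp
  have "AE \<omega> in M. L \<omega> \<le> (R \<omega> - 1) / ln b"
    using eD(3) eY(3) eU(3) eV(3)
  proof eventually_elim
    case (elim \<omega>)
    have "L \<omega> = log b (R \<omega>)"
      unfolding L_def R_def using elim b1 by (simp add: log_mult log_divide)
    also have "\<dots> = ln (R \<omega>) / ln b" by (simp add: log_def)
    also have "\<dots> \<le> (R \<omega> - 1) / ln b"
      using elim lnb by (intro divide_right_mono ln_le_minus_one) (auto simp: R_def)
    finally show ?case .
  qed
  then have "(\<integral>\<omega>. L \<omega> \<partial>M) \<le> (\<integral>\<omega>. (R \<omega> - 1) / ln b \<partial>M)"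
    using Li Ri by (intro integral_mono_AE) auto
  also have "\<dots> = ((\<integral>\<omega>. R \<omega> \<partial>M) - 1) / ln b"
    using Ri by (simp add: prob_space)
  also have "\<dots> \<le> 0" using ER lnb by (simp add: divide_le_0_iff)
  finally have "(\<integral>\<omega>. L \<omega> \<partial>M) \<le> 0" .
  then show ?thesis using EL eD(1) eY(1) eU(1) eV(1) by simp
qed
end
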